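(* Let $n\ge 3$ and let $N$ be a nontrivial normal subgroup of $B_n$ with $N\cap B_{n-1}=\{1\}$. If the restriction of the Dehornoy ordering to $N$ is discrete (i.e. $N$ has a least positive element), then that least positive element lies in $C(n)$, the centralizer of $B_{n-1}$ in $B_n$.
   Context: $B_n$ is the Artin braid group with generators $\sigma_1,\dots,\sigma_{n-1}$; $B_{m}\subset B_n$ for $m\le n$ via $\sigma_i\mapsto\sigma_i$. A word in the generators is $i$-positive (resp. $i$-negative) if it contains only $\sigma_1,\dots,\sigma_i$ and their inverses, $\sigma_i$ occurs, and every occurrence of $\sigma_i$ has positive (resp. negative) exponent; a braid is $i$-positive if some representative word is. The Dehornoy ordering is the left-invariant total order on $B_n$ whose positive cone consists of all braids that are $i$-positive for some $i$. For $r\ge 2$, $C(r)$ denotes the centralizer of $B_{r-1}$ in $B_r$. *)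

theory Defs
  imports "HOL-Algebra.Coset"
begin

text \<open>Braid words: a letter (i, True) is sigma_i, (i, False) is sigma_i inverse (i \<ge> 1).\<close>
type_synonym bword = "(nat \<times> bool) list"

definition gens_in :: "nat \<Rightarrow> bword \<Rightarrow> bool" where
  "gens_in n w \<longleftrightarrow> (\<forall>(i, e) \<in> set w. 1 \<le> i \<and> i < n)"

inductive braid_step :: "bword \<Rightarrow> bword \<Rightarrow> bool" where
  free: "braid_step (u @ [(i, e), (i, \<not> e)] @ v) (u @ v)"
| comm: "i + 2 \<le> j \<or> j + 2 \<le> i \<Longrightarrow>
         braid_step (u @ [(i, e), (j, f)] @ v) (u @ [(j, f), (i, e)] @ v)"
| braid: "i = j + 1 \<or> j = i + 1 \<Longrightarrow>
         braid_step (u @ [(i, True), (j, True), (i, True)] @ v) (u @ [(j, True), (i, True), (j, True)] @ v)"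

definition braid_move :: "nat \<Rightarrow> bword \<Rightarrow> bword \<Rightarrow> bool" where
  "braid_move n u w \<longleftrightarrow> gens_in n u \<and> gens_in n w \<and> (braid_step u w \<or> braid_step w u)"

definition braid_rel :: "nat \<Rightarrow> (bword \<times> bword) set" where
  "braid_rel n = {(u, w). gens_in n u \<and> (braid_move n)\<^sup>*\<^sup>* u w}"

definition braid_cls :: "nat \<Rightarrow> bword \<Rightarrow> bword set" where
  "braid_cls n w = braid_rel n `` {w}"

definition braid_group :: "nat \<Rightarrow> bword set monoid" where
  "braid_group n = \<lparr> carrier = {w. gens_in n w} // braid_rel n,
     mult = (\<lambda>X Y. \<Union>x\<in>X. \<Union>y\<in>Y. braid_cls n (x @ y)),
     one = braid_cls n [] \<rparr>"

definition sub_braid :: "nat \<Rightarrow> nat \<Rightarrow> bword set set" where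
  "sub_braid n m = {braid_cls n w | w. gens_in m w}"

definition i_positive :: "nat \<Rightarrow> bword \<Rightarrow> bool" where
  "i_positive i w \<longleftrightarrow> gens_in (i + 1) w \<and> (i, True) \<in> set w \<and> (i, False) \<notin> set w"

definition dehornoy_pos :: "nat \<Rightarrow> bword set \<Rightarrow> bool" where
  "dehornoy_pos n x \<longleftrightarrow> x \<in> carrier (braid_group n) \<and> (\<exists>w\<in>x. \<exists>i\<ge>1. i_positive i w)"

definition dehornoy_less :: "nat \<Rightarrow> bword set \<Rightarrow> bword set \<Rightarrow> bool" where
  "dehornoy_less n x y \<longleftrightarrow> dehornoy_pos n (inv\<^bsub>braid_group n\<^esub> x \<otimes>\<^bsub>braid_group n\<^esub> y)"

definition dehornoy_le :: "nat \<Rightarrow> bword set \<Rightarrow> bword set \<Rightarrow> bool" where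
  "dehornoy_le n x y \<longleftrightarrow> x = y \<or> dehornoy_less n x y"

definition C_cent :: "nat \<Rightarrow> bword set set" where
  "C_cent r = {x \<in> carrier (braid_group r). \<forall>y \<in> sub_braid r (r - 1).
      x \<otimes>\<^bsub>braid_group r\<^esub> y = y \<otimes>\<^bsub>braid_group r\<^esub> x}"

end

theory Submission
  imports Defs
begin


definition finv :: "nat \<times> bool \<Rightarrow> nat \<times> bool" where
  "finv c = (fst c, \<not> snd c)"

definition push :: "bword \<Rightarrow> nat \<times> bool \<Rightarrow> bword" where
  "push acc a = (if acc \<noteq> [] \<and> last acc = finv a then butlast acc else acc @ [a])"

definition red :: "bword \<Rightarrow> bword" where
  "red w = foldl push [] w"

fun reduced :: "bword \<Rightarrow> bool" where
  "reduced [] = True"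
| "reduced [a] = True"
| "reduced (a # b # w) = (b \<noteq> finv a \<and> reduced (b # w))"

definition winv :: "bword \<Rightarrow> bword" where
  "winv w = rev (map finv w)"

lemma finv_finv[simp]: "finv (finv a) = a" by (simp add: finv_def)
lemma finv_eq_iff: "finv a = b \<longleftrightarrow> a = finv b" by (auto simp: finv_def)
lemma finv_simp[simp]: "finv (k, e) = (k, \<not> e)" by (simp add: finv_def)

lemma winv_winv[simp]: "winv (winv w) = w" by (simp add: winv_def rev_map comp_def)
lemma winv_append[simp]: "winv (u @ v) = winv v @ winv u" by (simp add: winv_def)
lemma winv_Cons[simp]: "winv (a # v) = winv v @ [finv a]" by (simp add: winv_def)
lemma winv_Nil[simp]: "winv [] = []" by (simp add: winv_def)

lemma reduced_snoc: "reduced (xs @ [a]) \<longleftrightarrow> reduced xs \<and> (xs \<noteq> [] \<longrightarrow> last xs \<noteq> finv a)"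
proof (induction xs rule: reduced.induct)
  case 1 then show ?case by simp
next
  case (2 b) then show ?case by (auto simp: finv_eq_iff)
next
  case (3 x y w) then show ?case by auto
qed

lemma reduced_append: "reduced (xs @ ys) \<longleftrightarrow> reduced xs \<and> reduced ys \<and> (xs \<noteq> [] \<and> ys \<noteq> [] \<longrightarrow> hd ys \<noteq> finv (last xs))"
proof (induction ys rule: rev_induct)
  case Nil then show ?case by simp
next
  case (snoc y ys)
  show ?case
  proof (cases "ys = []")
    case True then show ?thesis by (auto simp: reduced_snoc finv_eq_iff)
  next
    case False
    then show ?thesis using snoc by (auto simp: reduced_snoc simp flip: append_assoc simp del: append_assoc) 
  qed
qed

lemma push_reduced: "reduced acc \<Longrightarrow> reduced (push acc a)"
proof -
  assume r: "reduced acc"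
  show ?thesis
  proof (cases "acc \<noteq> [] \<and> last acc = finv a")
    case True
    then obtain p where "acc = p @ [last acc]" by (metis append_butlast_last_id)
    then have "reduced p" using r by (metis reduced_snoc)
    moreover have "butlast acc = p" by (subst \<open>acc = p @ [last acc]\<close>) simp
    ultimately show ?thesis using True by (simp add: push_def)
  next
    case False then show ?thesis using r by (auto simp: push_def reduced_snoc)
  qed
qed

lemma foldl_push_reduced: "reduced acc \<Longrightarrow> reduced (foldl push acc w)"
  by (induction w arbitrary: acc) (auto simp: push_reduced)

lemma red_reduced[simp]: "reduced (red w)"
  by (simp add: red_def foldl_push_reduced)

lemma foldl_push_id: "reduced (acc @ w) \<Longrightarrow> foldl push acc w = acc @ w"
proof (induction w arbitrary: acc)
  case Nil then show ?case by simp
next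
  case (Cons a w)
  have r: "reduced ((acc @ [a]) @ w)" using Cons.prems by simp
  then have "reduced (acc @ [a])" using reduced_append by blast
  then have "push acc a = acc @ [a]" by (auto simp: push_def reduced_snoc)
  then show ?case using Cons.IH[OF r] by simp
qed

lemma red_id: "reduced w \<Longrightarrow> red w = w"
  using foldl_push_id[of "[]" w] by (simp add: red_def)

lemma red_red[simp]: "red (red w) = red w" by (simp add: red_id)

lemma red_append: "red (u @ v) = foldl push (red u) v"
  by (simp add: red_def)

lemma push_cancel: "reduced acc \<Longrightarrow> push (push acc a) (finv a) = acc"
proof (cases "acc \<noteq> [] \<and> last acc = finv a")
  case True
  assume r: "reduced acc"
  obtain p where p: "acc = p @ [finv a]" using True by (metis append_butlast_last_id)
  have "p \<noteq> [] \<longrightarrow> last p \<noteq> a" using r p by (auto simp: reduced_snoc)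
  then show ?thesis using True p by (auto simp: push_def)
next
  case False then show ?thesis by (auto simp: push_def)
qed

lemma red_cancel: "red (u @ [a, finv a] @ v) = red (u @ v)"
proof -
  have "red (u @ [a, finv a] @ v) = foldl push (push (push (red u) a) (finv a)) v"
    by (simp add: red_append)
  also have "\<dots> = foldl push (red u) v" by (simp add: push_cancel)
  finally show ?thesis by (simp add: red_append)
qed

lemma red_cancel': "red (u @ [finv a, a] @ v) = red (u @ v)"
  using red_cancel[of u "finv a" v] by simp

lemma red_right_gen: "reduced acc \<Longrightarrow> red (u @ acc @ v) = red (u @ foldl push acc v)"
proof (induction v arbitrary: acc)
  case Nil then show ?case by simp
next
  case (Cons a v)
  have "red (u @ acc @ a # v) = red (u @ push acc a @ v)"
  proof (cases "acc \<noteq> [] \<and> last acc = finv a")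
    case True
    obtain p where p: "acc = p @ [finv a]" using True by (metis append_butlast_last_id)
    have "red (u @ acc @ a # v) = red ((u @ p) @ [finv a, a] @ v)" using p by simp
    also have "\<dots> = red (u @ p @ v)" by (simp only: red_cancel') simp
    finally show ?thesis using True p by (simp add: push_def)
  next
    case False then show ?thesis unfolding push_def by (simp only: if_False) simp
  qed
  also have "\<dots> = red (u @ foldl push (push acc a) v)"
    using Cons.IH[of "push acc a"] Cons.prems push_reduced by blast
  finally show ?case by simp
qed

lemma red_right: "red (u @ red v) = red (u @ v)"
  using red_right_gen[of "[]" u v] by (simp add: red_def)

lemma red_left: "red (red u @ v) = red (u @ v)"
  by (simp add: red_append)

lemma red_both: "red (red u @ red v) = red (u @ v)"
  by (simp add: red_left red_right)

lemma red_mid: "red z1 = red z2 \<Longrightarrow> red (x @ z1 @ y) = red (x @ z2 @ y)"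
  by (metis red_left red_right)

lemma red_winv: "red (x @ y @ winv y @ z) = red (x @ z)"
proof (induction y arbitrary: x z)
  case Nil then show ?case by simp
next
  case (Cons a y)
  have "red (x @ (a # y) @ winv (a # y) @ z) = red ((x @ [a]) @ y @ winv y @ ([finv a] @ z))" by simp
  also have "\<dots> = red ((x @ [a]) @ [finv a] @ z)" by (rule Cons.IH)
  also have "\<dots> = red (x @ [a, finv a] @ z)" by simp
  also have "\<dots> = red (x @ z)" by (rule red_cancel)
  finally show ?case .
qed

lemma set_push: "set (push acc a) \<subseteq> set acc \<union> {a}"
  by (auto simp: push_def dest: in_set_butlastD)

lemma set_foldl_push: "set (foldl push acc w) \<subseteq> set acc \<union> set w"
proof (induction w arbitrary: acc)
  case Nil then show ?case by simp
next
  case (Cons a w) then show ?case using set_push[of acc a] by fastforce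
qed

lemma set_red: "set (red w) \<subseteq> set w"
  using set_foldl_push[of "[]" w] by (simp add: red_def)



definition img :: "nat \<Rightarrow> bool \<Rightarrow> nat \<Rightarrow> bword" where
  "img i g k = (if g then (if k = Suc i then [(Suc i, True), (i, True), (Suc i, False)]
                          else if k = i then [(Suc i, True)] else [(k, True)])
                else (if k = Suc i then [(i, True)]
                      else if k = i then [(i, False), (Suc i, True), (i, True)] else [(k, True)]))"

definition limw :: "nat \<Rightarrow> bool \<Rightarrow> nat \<times> bool \<Rightarrow> bword" where
  "limw i g c = (if snd c then img i g (fst c) else winv (img i g (fst c)))"

definition sub :: "nat \<Rightarrow> bool \<Rightarrow> bword \<Rightarrow> bword" where
  "sub i g z = concat (map (limw i g) z)"

fun act :: "bword \<Rightarrow> bword \<Rightarrow> bword" where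
  "act [] z = z"
| "act ((i, g) # u) z = act u (sub i g z)"

lemma sub_append[simp]: "sub i g (u @ v) = sub i g u @ sub i g v" by (simp add: sub_def)
lemma sub_Cons: "sub i g (a # v) = limw i g a @ sub i g v" by (simp add: sub_def)
lemma sub_Nil[simp]: "sub i g [] = []" by (simp add: sub_def)

lemma limw_finv: "limw i g (finv c) = winv (limw i g c)"
  by (cases c) (simp add: limw_def)

lemma red_sub_gen: "reduced acc \<Longrightarrow> red (sub i g (acc @ v)) = red (sub i g (foldl push acc v))"
proof (induction v arbitrary: acc)
  case Nil then show ?case by simp
next
  case (Cons a v)
  have "red (sub i g (acc @ a # v)) = red (sub i g (push acc a @ v))"
  proof (cases "acc \<noteq> [] \<and> last acc = finv a")
    case True
    obtain p where p: "acc = p @ [finv a]" using True by (metis append_butlast_last_id)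
    have "sub i g (acc @ a # v) = sub i g p @ winv (limw i g a) @ winv (winv (limw i g a)) @ sub i g v"
      using p by (simp add: sub_Cons limw_finv)
    then have "red (sub i g (acc @ a # v)) = red (sub i g p @ sub i g v)"
      by (simp only: red_winv)
    then show ?thesis using True p by (simp add: push_def)
  next
    case False then show ?thesis unfolding push_def by (simp only: if_False) simp
  qed
  also have "\<dots> = red (sub i g (foldl push (push acc a) v))"
    using Cons.IH[of "push acc a"] Cons.prems push_reduced by blast
  finally show ?case by simp
qed

lemma red_sub_red: "red (sub i g (red z)) = red (sub i g z)"
  using red_sub_gen[of "[]" i g z] by (simp add: red_def)

lemma red_sub_cong: "red z1 = red z2 \<Longrightarrow> red (sub i g z1) = red (sub i g z2)"
  by (metis red_sub_red)

lemma red_single[simp]: "red [c] = [c]" by (simp add: red_def push_def)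

lemma act_Cons: "act (a # u) z = act u (sub (fst a) (snd a) z)"
  by (cases a) simp

declare act.simps(2)[simp del]

lemma act_append: "act (u @ v) z = act v (act u z)"
  by (induction u arbitrary: z) (auto simp: act_Cons)

lemma act_cong: "red z1 = red z2 \<Longrightarrow> red (act u z1) = red (act u z2)"
proof (induction u arbitrary: z1 z2)
  case Nil then show ?case by simp
next
  case (Cons a u)
  then show ?case unfolding act_Cons by (metis red_sub_cong)
qed

lemma act_zappend: "act u (x @ y) = act u x @ act u y"
  by (induction u arbitrary: x y) (auto simp: act_Cons)

lemma act_letters: "(\<And>c. red (act u [c]) = red (act w [c])) \<Longrightarrow> red (act u z) = red (act w z)"
proof (induction z)
  case Nil
  have "act u [] = []" "act w [] = []" using act_zappend[of u "[]" "[]"] act_zappend[of w "[]" "[]"] by auto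
  then show ?case by simp
next
  case (Cons c z)
  have "red (act u (c # z)) = red (red (act u [c]) @ red (act u z))"
    using act_zappend[of u "[c]" z] by (simp add: red_both)
  also have "\<dots> = red (red (act w [c]) @ red (act w z))" using Cons by simp
  also have "\<dots> = red (act w (c # z))"
    using act_zappend[of w "[c]" z] by (simp add: red_both)
  finally show ?case .
qed

lemma act_mid: "(\<And>c. red (act m [c]) = red (act m' [c])) \<Longrightarrow> red (act (p @ m @ q) z) = red (act (p @ m' @ q) z)"
proof -
  assume h: "\<And>c. red (act m [c]) = red (act m' [c])"
  have "red (act m (act p z)) = red (act m' (act p z))" by (rule act_letters[OF h])
  then have "red (act q (act m (act p z))) = red (act q (act m' (act p z)))" by (rule act_cong)
  then show ?thesis by (simp add: act_append)
qed

lemma free_letter: "red (act [(i, e), (i, \<not> e)] [c]) = [c]"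
proof -
  obtain k f where c: "c = (k, f)" by (cases c)
  show ?thesis unfolding c
    by (cases e; cases f; cases "k = Suc i"; cases "k = i") (simp_all add: act_Cons sub_def limw_def img_def red_def push_def)
qed

lemma comm_letter0: "i + 2 \<le> j \<Longrightarrow> red (act [(i, e), (j, f)] [(k,h)]) = red (act [(j, f), (i, e)] [(k,h)])"
  by (cases e; cases f; cases h; cases "k = Suc i"; cases "k = i"; cases "k = Suc j"; cases "k = j") (simp_all add: act_Cons sub_def limw_def img_def red_def push_def)

lemma comm_letter: "i + 2 \<le> j \<or> j + 2 \<le> i \<Longrightarrow> red (act [(i, e), (j, f)] [c]) = red (act [(j, f), (i, e)] [c])"
  by (cases c) (metis comm_letter0)

lemma braid_letter0: "j = Suc i \<Longrightarrow> red (act [(i, True), (j, True), (i, True)] [(k,h)]) = red (act [(j, True), (i, True), (j, True)] [(k,h)])"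
  by (cases h; cases "k = Suc i"; cases "k = i"; cases "k = Suc (Suc i)") (simp_all add: act_Cons sub_def limw_def img_def red_def push_def)

lemma braid_letter: "i = j + 1 \<or> j = i + 1 \<Longrightarrow> red (act [(i, True), (j, True), (i, True)] [c]) = red (act [(j, True), (i, True), (j, True)] [c])"
  by (cases c) (metis braid_letter0 Suc_eq_plus1)

lemma step_act: "braid_step u w \<Longrightarrow> red (act u z) = red (act w z)"
proof (induction rule: braid_step.induct)
  case (free u i e v)
  have "red (act (u @ [(i, e), (i, \<not> e)] @ v) z) = red (act (u @ [] @ v) z)"
    by (rule act_mid) (simp add: free_letter)
  then show ?case by simp
next
  case (comm i j u e f v)
  then show ?case by (intro act_mid comm_letter) 
next
  case (braid i j u v)
  then show ?case by (intro act_mid braid_letter)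
qed

lemma move_act: "(braid_move n)\<^sup>*\<^sup>* u w \<Longrightarrow> red (act u z) = red (act w z)"
proof (induction rule: rtranclp_induct)
  case base then show ?case by simp
next
  case (step y w)
  then show ?case using step_act unfolding braid_move_def by metis
qed



definition InvA :: "nat \<Rightarrow> bword \<Rightarrow> bword \<Rightarrow> bool" where
  "InvA i w R \<longleftrightarrow> (w = [] \<longrightarrow> R = []) \<and>
   (w \<noteq> [] \<longrightarrow>
   (last w = (Suc i,True) \<longrightarrow> (\<exists>p. R = p @ [(i,True),(Suc i,False)])) \<and>
   (last w = (Suc i,False) \<longrightarrow> (\<exists>p. R = p @ [(i,False),(Suc i,False)])) \<and>
   (last w = (i,False) \<longrightarrow> (\<exists>p. R = p @ [(Suc i,False)] \<and> (p = [] \<or> fst (last p) \<noteq> i))) \<and>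
   (last w = (i,True) \<longrightarrow> (\<exists>p x. R = p @ [x] \<and> x \<in> {(Suc i,True),(i,True),(i,False)})) \<and>
   (fst (last w) \<noteq> i \<and> fst (last w) \<noteq> Suc i \<longrightarrow> (\<exists>p. R = p @ [last w])))"

lemma red_sub_snoc: "red (sub i g (w @ [a])) = foldl push (red (sub i g w)) (limw i g a)"
  by (simp add: red_append sub_def)

lemma larueA_step:
  assumes IH: "InvA i w R" and r: "reduced (w @ [a])"
  shows "InvA i (w @ [a]) (foldl push R (limw i True a))"
proof -
  obtain k f where a: "a = (k, f)" by (cases a)
  have na: "w \<noteq> [] \<Longrightarrow> last w \<noteq> finv a" using r by (simp add: reduced_snoc)
  show ?thesis
  proof (cases "w = []")
    case True
    then have "R = []" using IH by (simp add: InvA_def)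
    then show ?thesis using True a
      by (cases f; cases "k = Suc i"; cases "k = i") (auto simp: InvA_def limw_def img_def push_def butlast_append)
  next
    case False
    obtain b0 e where b: "last w = (b0, e)" by (cases "last w")
    have nb: "(b0, e) \<noteq> (k, \<not> f)" using na[OF False] b a by simp
    consider "b0 = Suc i" "e" | "b0 = Suc i" "\<not> e" | "b0 = i" "e" | "b0 = i" "\<not> e" | "b0 \<noteq> i" "b0 \<noteq> Suc i" by blast
    then show ?thesis
    proof cases
      case 1
      then obtain p where R: "R = p @ [(i,True),(Suc i,False)]" using IH False b by (auto simp: InvA_def)
      show ?thesis using R a nb 1
        by (cases f; cases "k = Suc i"; cases "k = i") (auto simp: InvA_def limw_def img_def push_def butlast_append)
    next
      case 2
      then obtain p where R: "R = p @ [(i,False),(Suc i,False)]" using IH False b by (auto simp: InvA_def)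
      show ?thesis using R a nb 2
        by (cases f; cases "k = Suc i"; cases "k = i") (auto simp: InvA_def limw_def img_def push_def butlast_append)
    next
      case 3
      then obtain p x where R: "R = p @ [x]" "x \<in> {(Suc i,True),(i,True),(i,False)}" using IH False b by (auto simp: InvA_def)
      show ?thesis using R a nb 3
        by (cases f; cases "k = Suc i"; cases "k = i") (auto simp: InvA_def limw_def img_def push_def butlast_append)
    next
      case 4
      then obtain p where R: "R = p @ [(Suc i,False)]" "p = [] \<or> fst (last p) \<noteq> i" using IH False b by (auto simp: InvA_def)
      show ?thesis using R a nb 4
        by (cases f; cases "k = Suc i"; cases "k = i") (auto simp: InvA_def limw_def img_def push_def butlast_append)
    next
      case 5
      then obtain p where R: "R = p @ [(b0,e)]" using IH False b by (auto simp: InvA_def)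
      show ?thesis using R a nb 5
        by (cases f; cases "k = Suc i"; cases "k = i") (auto simp: InvA_def limw_def img_def push_def butlast_append)
    qed
  qed
qed

lemma larueA: "reduced w \<Longrightarrow> InvA i w (red (sub i True w))"
proof (induction w rule: rev_induct)
  case Nil then show ?case by (simp add: InvA_def red_def)
next
  case (snoc a w)
  have "reduced w" using snoc.prems by (simp add: reduced_snoc)
  then show ?case using larueA_step[OF snoc.IH snoc.prems] by (simp del: sub_append add: red_sub_snoc)
qed

lemma larueA_end: "reduced z \<Longrightarrow> z \<noteq> [] \<Longrightarrow> last z = (Suc i, False) \<Longrightarrow>
   red (sub i True z) \<noteq> [] \<and> last (red (sub i True z)) = (Suc i, False)"
  using larueA[of z i] by (auto simp: InvA_def)

lemma limw_fix: "j < i \<Longrightarrow> fst c = Suc i \<Longrightarrow> limw j g c = [c]"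
  by (cases c) (auto simp: limw_def img_def)

lemma limw_avoid: "j < i \<Longrightarrow> fst c \<noteq> Suc i \<Longrightarrow> d \<in> set (limw j g c) \<Longrightarrow> fst d \<noteq> Suc i"
  by (cases c) (auto simp: limw_def img_def winv_def split: if_splits)

lemma sub_inv: "red (sub j (\<not> g) (sub j g z)) = red z"
proof -
  have "red (act [(j, g), (j, \<not> g)] z) = red (act [] z)"
    by (rule act_letters) (simp add: free_letter)
  then show ?thesis by (simp add: act_Cons)
qed

lemma sub_avoid: "j < i \<Longrightarrow> \<forall>c\<in>set v. fst c \<noteq> Suc i \<Longrightarrow> \<forall>d\<in>set (sub j g v). fst d \<noteq> Suc i"
  by (auto simp: sub_def dest: limw_avoid)

lemma reduced_appendD: "reduced (xs @ ys) \<Longrightarrow> reduced xs \<and> reduced ys"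
  by (simp add: reduced_append)

lemma blockQ:
  assumes ji: "j < i"
  shows "reduced p \<Longrightarrow> (red (sub j g p) = [] \<longleftrightarrow> p = []) \<and>
      (p \<noteq> [] \<longrightarrow> (fst (last p) = Suc i \<longrightarrow> last (red (sub j g p)) = last p) \<and>
                    (fst (last p) \<noteq> Suc i \<longrightarrow> fst (last (red (sub j g p))) \<noteq> Suc i))"
proof (induction "length p" arbitrary: p rule: less_induct)
  case less
  show ?case
  proof (cases "p = []")
    case True then show ?thesis by (simp add: red_def)
  next
    case False
    show ?thesis
    proof (cases "fst (last p) = Suc i")
      case True
      obtain p' a where p: "p = p' @ [a]" using False by (metis append_butlast_last_id)
      have a: "fst a = Suc i" using True p by simp
      have rp': "reduced p'" and na: "p' \<noteq> [] \<Longrightarrow> last p' \<noteq> finv a" using less.prems p by (auto simp: reduced_snoc)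
      have IH: "(red (sub j g p') = [] \<longleftrightarrow> p' = []) \<and>
      (p' \<noteq> [] \<longrightarrow> (fst (last p') = Suc i \<longrightarrow> last (red (sub j g p')) = last p') \<and>
                    (fst (last p') \<noteq> Suc i \<longrightarrow> fst (last (red (sub j g p'))) \<noteq> Suc i))"
        using less.hyps[of p'] p rp' by simp
      have eq: "red (sub j g p) = push (red (sub j g p')) a"
        using p limw_fix[OF ji a] by (simp del: sub_append add: red_sub_snoc)
      have "\<not> (red (sub j g p') \<noteq> [] \<and> last (red (sub j g p')) = finv a)"
      proof
        assume h: "red (sub j g p') \<noteq> [] \<and> last (red (sub j g p')) = finv a"
        then have "p' \<noteq> []" using IH by blast
        moreover have "fst (last (red (sub j g p'))) = Suc i" using h a by (cases a) simp
        ultimately have "last p' = finv a" using IH h by metis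
        then show False using na \<open>p' \<noteq> []\<close> by blast
      qed
      then have "red (sub j g p) = red (sub j g p') @ [a]" using eq unfolding push_def by presburger
      then show ?thesis using p by simp
    next
      case nsl: False
      define v where "v = rev (takeWhile (\<lambda>c. fst c \<noteq> Suc i) (rev p))"
      define q where "q = rev (dropWhile (\<lambda>c. fst c \<noteq> Suc i) (rev p))"
      have pqv: "p = q @ v" unfolding q_def v_def by (metis rev_append rev_rev_ident takeWhile_dropWhile_id)
      have vsl: "\<forall>c\<in>set v. fst c \<noteq> Suc i" unfolding v_def by (auto dest: set_takeWhileD)
      have vne: "v \<noteq> []" using nsl False unfolding v_def by (cases "rev p") auto
      have qsl: "q \<noteq> [] \<Longrightarrow> fst (last q) = Suc i"
        unfolding q_def using hd_dropWhile[of "\<lambda>c. fst c \<noteq> Suc i" "rev p"] by (simp add: last_rev)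
      have rq: "reduced q" and rv: "reduced v" using less.prems pqv reduced_appendD by blast+
      have Y: "red (sub j g v) \<noteq> []"
      proof
        assume "red (sub j g v) = []"
        then have "red (sub j (\<not> g) (red (sub j g v))) = []" by (simp add: red_def)
        then have "red v = []" by (simp add: red_sub_red sub_inv)
        then show False using red_id[OF rv] vne by simp
      qed
      have Ysl: "\<forall>d\<in>set (red (sub j g v)). fst d \<noteq> Suc i"
        using sub_avoid[OF ji vsl, of g] set_red by blast
      have eq: "red (sub j g p) = red (red (sub j g q) @ red (sub j g v))"
        using pqv by (simp add: red_both)
      show ?thesis
      proof (cases "q = []")
        case True
        then have "red (sub j g p) = red (sub j g v)" using eq by (simp add: red_def[of "[] @ _"])
          (metis append_Nil red_left red_red)
        then show ?thesis using Y Ysl False nsl by (simp add: last_in_set)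
      next
        case qne: False
        have lq: "length q < length p" using pqv vne by simp
        have IHq: "red (sub j g q) \<noteq> [] \<and> last (red (sub j g q)) = last q"
          using less.hyps[OF lq rq] qne qsl by blast
        have "reduced (red (sub j g q) @ red (sub j g v))"
          unfolding reduced_append
        proof (intro conjI impI)
          show "hd (red (sub j g v)) \<noteq> finv (last (red (sub j g q)))"
          proof
            assume "hd (red (sub j g v)) = finv (last (red (sub j g q)))"
            then have "fst (hd (red (sub j g v))) = Suc i" using IHq qsl[OF qne] by (simp add: finv_def)
            then show False using Ysl Y by (simp add: hd_in_set)
          qed
        qed simp_all
        then have "red (sub j g p) = red (sub j g q) @ red (sub j g v)" using eq red_id by simp
        then show ?thesis using Y Ysl False nsl by (simp add: last_in_set)
      qed
    qed
  qed
qed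

lemma blockE:
  assumes ji: "j < i" and r: "reduced z" and ne: "z \<noteq> []" and l: "last z = (Suc i, False)"
  shows "red (sub j g z) \<noteq> [] \<and> last (red (sub j g z)) = (Suc i, False)"
proof -
  obtain p where z: "z = p @ [(Suc i, False)]" using ne l by (metis append_butlast_last_id)
  have rp: "reduced p" and np: "p \<noteq> [] \<Longrightarrow> last p \<noteq> (Suc i, True)" using r z by (auto simp: reduced_snoc)
  have Q: "(red (sub j g p) = [] \<longleftrightarrow> p = []) \<and>
      (p \<noteq> [] \<longrightarrow> (fst (last p) = Suc i \<longrightarrow> last (red (sub j g p)) = last p) \<and>
                    (fst (last p) \<noteq> Suc i \<longrightarrow> fst (last (red (sub j g p))) \<noteq> Suc i))"
    using blockQ[OF ji rp] .
  have eq: "red (sub j g z) = push (red (sub j g p)) (Suc i, False)"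
    using z limw_fix[OF ji, of "(Suc i, False)" g] by (simp del: sub_append add: red_sub_snoc)
  have "\<not> (red (sub j g p) \<noteq> [] \<and> last (red (sub j g p)) = (Suc i, True))"
  proof
    assume h: "red (sub j g p) \<noteq> [] \<and> last (red (sub j g p)) = (Suc i, True)"
    then have "p \<noteq> []" using Q by blast
    then have "last p = (Suc i, True)" using Q h by (metis fst_conv)
    then show False using np \<open>p \<noteq> []\<close> by blast
  qed
  then show ?thesis using eq by (auto simp: push_def)
qed



lemma closure_act:
  "\<forall>c\<in>set u. fst c \<le> i \<and> c \<noteq> (i, False) \<Longrightarrow> reduced z \<Longrightarrow> z \<noteq> [] \<Longrightarrow> last z = (Suc i, False) \<Longrightarrow>
   red (act u z) \<noteq> [] \<and> last (red (act u z)) = (Suc i, False)"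
proof (induction u arbitrary: z)
  case Nil then show ?case by (simp add: red_id)
next
  case (Cons a u)
  obtain k g where a: "a = (k, g)" by (cases a)
  have ka: "k \<le> i" "(k, g) \<noteq> (i, False)" using Cons.prems(1) a by auto
  define z' where "z' = red (sub k g z)"
  have z': "z' \<noteq> [] \<and> last z' = (Suc i, False)"
  proof (cases "k = i")
    case True
    then have "g" using ka by simp
    then show ?thesis using larueA_end[OF Cons.prems(2-4)] True unfolding z'_def by simp
  next
    case False
    then have "k < i" using ka by simp
    then show ?thesis using blockE[OF _ Cons.prems(2-4)] unfolding z'_def by blast
  qed
  have IH: "red (act u z') \<noteq> [] \<and> last (red (act u z')) = (Suc i, False)"
    using Cons.IH[of z'] Cons.prems(1) z' unfolding z'_def by simp
  have "red (act u z') = red (act u (sub k g z))" unfolding z'_def by (rule act_cong) simp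
  then show ?case using IH a by (simp add: act_Cons)
qed

lemma act_fix: "\<forall>c\<in>set u. fst c < i \<Longrightarrow> act u [(Suc i, True)] = [(Suc i, True)]"
proof (induction u)
  case Nil then show ?case by simp
next
  case (Cons a u)
  have "sub (fst a) (snd a) [(Suc i, True)] = [(Suc i, True)]"
    using limw_fix[of "fst a" i "(Suc i, True)" "snd a"] Cons.prems by (simp add: sub_def)
  then show ?case using Cons by (simp add: act_Cons)
qed

lemma acyclic:
  assumes pos: "i_positive i u"
  shows "\<not> (braid_move n)\<^sup>*\<^sup>* [] u"
proof
  assume m: "(braid_move n)\<^sup>*\<^sup>* [] u"
  have g: "\<forall>c\<in>set u. fst c < Suc i" and it: "(i, True) \<in> set u" and nf: "(i, False) \<notin> set u"
    using pos by (auto simp: i_positive_def gens_in_def)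
  obtain ys zs where u: "u = ys @ (i, True) # zs" and ny: "(i, True) \<notin> set ys"
    using split_list_first[OF it] by blast
  have ys: "\<forall>c\<in>set ys. fst c < i"
  proof
    fix c assume c: "c \<in> set ys"
    obtain k e where ce: "c = (k, e)" by (cases c)
    have "c \<in> set u" using c u by simp
    then have "k < Suc i" using g ce by fastforce
    moreover have "k \<noteq> i" using c ce ny nf u by (cases e) auto
    ultimately show "fst c < i" using ce by simp
  qed
  have zs: "\<forall>c\<in>set zs. fst c \<le> i \<and> c \<noteq> (i, False)"
  proof
    fix c assume "c \<in> set zs"
    then have "c \<in> set u" using u by simp
    then show "fst c \<le> i \<and> c \<noteq> (i, False)" using g nf by fastforce
  qed
  have "act u [(Suc i, True)] = act zs [(Suc i, True), (i, True), (Suc i, False)]"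
    using act_fix[OF ys] u by (simp add: act_append act_Cons sub_def limw_def img_def)
  then have "red (act u [(Suc i, True)]) \<noteq> [] \<and> last (red (act u [(Suc i, True)])) = (Suc i, False)"
    using closure_act[OF zs, of "[(Suc i, True), (i, True), (Suc i, False)]"] by simp
  moreover have "red (act [] [(Suc i, True)]) = red (act u [(Suc i, True)])" by (rule move_act[OF m])
  ultimately show False by simp
qed



lemma bm_sym: "braid_move n u w \<Longrightarrow> braid_move n w u"
  by (auto simp: braid_move_def)

lemma bm_symp: "symp (braid_move n)"
  by (auto intro: sympI bm_sym)

lemma reach_sym: "(braid_move n)\<^sup>*\<^sup>* u w \<Longrightarrow> (braid_move n)\<^sup>*\<^sup>* w u"
  using symp_rtranclp[OF bm_symp] by (metis sympD)

lemma reach_gens: "(braid_move n)\<^sup>*\<^sup>* u w \<Longrightarrow> gens_in n u \<Longrightarrow> gens_in n w"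
  by (induction rule: rtranclp_induct) (auto simp: braid_move_def)

lemma mem_cls: "v \<in> braid_cls n w \<longleftrightarrow> gens_in n w \<and> (braid_move n)\<^sup>*\<^sup>* w v"
  by (simp add: braid_cls_def braid_rel_def)

lemma cls_mem: "gens_in n w \<Longrightarrow> w \<in> braid_cls n w"
  by (simp add: mem_cls)

lemma carrier_iff: "x \<in> carrier (braid_group n) \<longleftrightarrow> (\<exists>w. gens_in n w \<and> x = braid_cls n w)"
  by (auto simp: braid_group_def quotient_def braid_cls_def)

lemma carrier_gens: "x \<in> carrier (braid_group n) \<Longrightarrow> v \<in> x \<Longrightarrow> gens_in n v"
  by (auto simp: carrier_iff mem_cls intro: reach_gens)

lemma cls_eq: "gens_in n w \<Longrightarrow> v \<in> braid_cls n w \<Longrightarrow> braid_cls n w = braid_cls n v"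
proof -
  assume g: "gens_in n w" and v: "v \<in> braid_cls n w"
  then have r: "(braid_move n)\<^sup>*\<^sup>* w v" by (simp add: mem_cls)
  have gv: "gens_in n v" using reach_gens[OF r g] .
  have "\<forall>x. x \<in> braid_cls n w \<longleftrightarrow> x \<in> braid_cls n v"
    unfolding mem_cls using g gv r reach_sym[OF r] by (meson rtranclp_trans)
  then show ?thesis by blast
qed

lemma carrier_eq: "x \<in> carrier (braid_group n) \<Longrightarrow> v \<in> x \<Longrightarrow> x = braid_cls n v"
proof -
  assume x: "x \<in> carrier (braid_group n)" and v: "v \<in> x"
  obtain w where "gens_in n w" "x = braid_cls n w" using x by (auto simp: carrier_iff)
  then show ?thesis using v cls_eq by blast
qed

lemma cls_carrier: "gens_in n w \<Longrightarrow> braid_cls n w \<in> carrier (braid_group n)"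
  by (auto simp: carrier_iff)

lemma mult_mem: "x \<in> carrier (braid_group n) \<Longrightarrow> y \<in> carrier (braid_group n) \<Longrightarrow> a \<in> x \<Longrightarrow> b \<in> y
   \<Longrightarrow> a @ b \<in> x \<otimes>\<^bsub>braid_group n\<^esub> y"
proof -
  assume xy: "x \<in> carrier (braid_group n)" "y \<in> carrier (braid_group n)" "a \<in> x" "b \<in> y"
  have "gens_in n (a @ b)" using carrier_gens xy by (fastforce simp: gens_in_def)
  then have "a @ b \<in> braid_cls n (a @ b)" by (rule cls_mem)
  then show ?thesis using xy by (auto simp: braid_group_def)
qed

lemma one_eq: "\<one>\<^bsub>braid_group n\<^esub> = braid_cls n []"
  by (simp add: braid_group_def)

lemma gens_winv: "gens_in n v \<Longrightarrow> gens_in n (winv v)"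
  by (auto simp: gens_in_def winv_def finv_def)

lemma gens_mono: "gens_in m v \<Longrightarrow> m \<le> n \<Longrightarrow> gens_in n v"
  by (auto simp: gens_in_def)

lemma winv_cancel_reach: "gens_in n v \<Longrightarrow> (braid_move n)\<^sup>*\<^sup>* (winv v @ v) []"
proof (induction v)
  case Nil then show ?case by simp
next
  case (Cons a v)
  obtain k f where a: "a = (k, f)" by (cases a)
  have gv: "gens_in n v" using Cons.prems by (simp add: gens_in_def)
  have st: "braid_step (winv v @ [(k, \<not> f), (k, \<not> \<not> f)] @ v) (winv v @ v)"
    by (rule braid_step.free)
  have "braid_move n (winv (a # v) @ a # v) (winv v @ v)"
    using st Cons.prems gens_winv[OF Cons.prems] a gens_winv[OF gv] gv
    by (auto simp: braid_move_def gens_in_def)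
  then show ?case using Cons.IH[OF gv] by (rule converse_rtranclp_into_rtranclp)
qed

lemma inv_cls:
  assumes G: "group (braid_group n)" and v: "gens_in n v"
  shows "inv\<^bsub>braid_group n\<^esub> (braid_cls n v) = braid_cls n (winv v)"
proof -
  interpret G: group "braid_group n" by (rule G)
  have c1: "braid_cls n v \<in> carrier (braid_group n)" using v by (rule cls_carrier)
  have c2: "braid_cls n (winv v) \<in> carrier (braid_group n)" using gens_winv[OF v] by (rule cls_carrier)
  have m: "winv v @ v \<in> braid_cls n (winv v) \<otimes>\<^bsub>braid_group n\<^esub> braid_cls n v"
    by (rule mult_mem[OF c2 c1 cls_mem[OF gens_winv[OF v]] cls_mem[OF v]])
  have pc: "braid_cls n (winv v) \<otimes>\<^bsub>braid_group n\<^esub> braid_cls n v \<in> carrier (braid_group n)"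
    using c1 c2 by simp
  have e1: "braid_cls n (winv v) \<otimes>\<^bsub>braid_group n\<^esub> braid_cls n v = braid_cls n (winv v @ v)"
    by (rule carrier_eq[OF pc m])
  have gw: "gens_in n (winv v @ v)" using v gens_winv[OF v] by (auto simp: gens_in_def)
  have "[] \<in> braid_cls n (winv v @ v)" using gw winv_cancel_reach[OF v] by (simp add: mem_cls)
  then have "braid_cls n (winv v @ v) = braid_cls n []" by (rule cls_eq[OF gw])
  then have "braid_cls n (winv v) \<otimes>\<^bsub>braid_group n\<^esub> braid_cls n v = \<one>\<^bsub>braid_group n\<^esub>"
    using e1 by (simp add: one_eq)
  then show ?thesis using G.inv_equality c1 c2 by blast
qed

lemma pos_mult:
  assumes G: "group (braid_group n)" and x: "dehornoy_pos n x" and y: "dehornoy_pos n y"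
  shows "dehornoy_pos n (x \<otimes>\<^bsub>braid_group n\<^esub> y)"
proof -
  interpret G: group "braid_group n" by (rule G)
  obtain a i where a: "a \<in> x" "i \<ge> 1" "i_positive i a" and xc: "x \<in> carrier (braid_group n)"
    using x by (auto simp: dehornoy_pos_def)
  obtain b j where b: "b \<in> y" "j \<ge> 1" "i_positive j b" and yc: "y \<in> carrier (braid_group n)"
    using y by (auto simp: dehornoy_pos_def)
  have ab: "a @ b \<in> x \<otimes>\<^bsub>braid_group n\<^esub> y" by (rule mult_mem[OF xc yc a(1) b(1)])
  have "i_positive (max i j) (a @ b)"
  proof (cases "i \<le> j")
    case True
    have "(j, False) \<notin> set a"
    proof
      assume "(j, False) \<in> set a"
      then have "j < i + 1" using a(3) by (auto simp: i_positive_def gens_in_def)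
      then have "j = i" using True by simp
      then show False using a(3) \<open>(j, False) \<in> set a\<close> by (auto simp: i_positive_def)
    qed
    moreover have "(j, True) \<in> set b" "(j, False) \<notin> set b" "gens_in (j+1) a" "gens_in (j+1) b"
      using a b True by (auto simp: i_positive_def gens_in_def)
    ultimately show ?thesis using True by (auto simp: i_positive_def gens_in_def max_def)
  next
    case False
    have "(i, False) \<notin> set b"
    proof
      assume "(i, False) \<in> set b"
      then have "i < j + 1" using b(3) by (auto simp: i_positive_def gens_in_def)
      then show False using False by simp
    qed
    moreover have "(i, True) \<in> set a" "(i, False) \<notin> set a" "gens_in (i+1) a" "gens_in (i+1) b"
      using a b False by (auto simp: i_positive_def gens_in_def)
    ultimately show ?thesis using False by (auto simp: i_positive_def gens_in_def max_def)
  qed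
  moreover have "max i j \<ge> 1" using a(2) by simp
  moreover have "x \<otimes>\<^bsub>braid_group n\<^esub> y \<in> carrier (braid_group n)" using xc yc by simp
  ultimately show ?thesis using ab unfolding dehornoy_pos_def by blast
qed

lemma pos_one: "\<not> dehornoy_pos n \<one>\<^bsub>braid_group n\<^esub>"
proof
  assume "dehornoy_pos n \<one>\<^bsub>braid_group n\<^esub>"
  then obtain w i where "w \<in> braid_cls n []" "i_positive i w" by (auto simp: dehornoy_pos_def one_eq)
  then show False using acyclic by (auto simp: mem_cls)
qed

lemma pos_conj:
  assumes G: "group (braid_group n)" and x: "dehornoy_pos n x" and xN: "x \<in> N"
    and inter: "N \<inter> sub_braid n (n - 1) = {\<one>\<^bsub>braid_group n\<^esub>}"
    and v: "gens_in (n - 1) v"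
  shows "dehornoy_pos n (braid_cls n v \<otimes>\<^bsub>braid_group n\<^esub> x \<otimes>\<^bsub>braid_group n\<^esub> braid_cls n (winv v))"
proof -
  interpret G: group "braid_group n" by (rule G)
  obtain w i where w: "w \<in> x" "i \<ge> 1" "i_positive i w" and xc: "x \<in> carrier (braid_group n)"
    using x by (auto simp: dehornoy_pos_def)
  have gw: "gens_in n w" using carrier_gens[OF xc w(1)] .
  have "(i, True) \<in> set w" using w(3) by (simp add: i_positive_def)
  then have "i < n" using gw by (auto simp: gens_in_def)
  have "i = n - 1"
  proof (rule ccontr)
    assume "i \<noteq> n - 1"
    then have "i + 1 \<le> n - 1" using \<open>i < n\<close> by simp
    then have "gens_in (n - 1) w" using w(3) by (auto simp: i_positive_def gens_in_def)
    moreover have "x = braid_cls n w" using carrier_eq[OF xc w(1)] .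
    ultimately have "x \<in> sub_braid n (n - 1)" by (auto simp: sub_braid_def)
    then have "x = \<one>\<^bsub>braid_group n\<^esub>" using xN inter by blast
    then show False using x pos_one by simp
  qed
  have gvn: "gens_in n v" using gens_mono[OF v] by simp
  have c1: "braid_cls n v \<in> carrier (braid_group n)" using gvn by (rule cls_carrier)
  have c2: "braid_cls n (winv v) \<in> carrier (braid_group n)" using gens_winv[OF gvn] by (rule cls_carrier)
  have m1: "v @ w \<in> braid_cls n v \<otimes>\<^bsub>braid_group n\<^esub> x"
    by (rule mult_mem[OF c1 xc cls_mem[OF gvn] w(1)])
  have m2: "(v @ w) @ winv v \<in> braid_cls n v \<otimes>\<^bsub>braid_group n\<^esub> x \<otimes>\<^bsub>braid_group n\<^esub> braid_cls n (winv v)"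
    by (rule mult_mem[OF _ c2 m1 cls_mem[OF gens_winv[OF gvn]]]) (simp add: c1 xc)
  have gwi: "gens_in (n - 1) (winv v)" using gens_winv[OF v] .
  have "i_positive (n - 1) ((v @ w) @ winv v)"
    using w(3) \<open>i = n - 1\<close> v gwi \<open>i < n\<close>
    by (auto simp: i_positive_def gens_in_def)
  moreover have "n - 1 \<ge> 1" using \<open>i = n - 1\<close> w(2) by simp
  moreover have "braid_cls n v \<otimes>\<^bsub>braid_group n\<^esub> x \<otimes>\<^bsub>braid_group n\<^esub> braid_cls n (winv v) \<in> carrier (braid_group n)"
    using c1 c2 xc by simp
  ultimately show ?thesis using m2 unfolding dehornoy_pos_def by blast
qed



theorem lemma2p1:
  fixes n :: nat and N :: "bword set set" and p :: "bword set"
  assumes "n \<ge> 3"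
    and "N \<lhd> braid_group n"
    and "N \<noteq> {\<one>\<^bsub>braid_group n\<^esub>}"
    and "N \<inter> sub_braid n (n - 1) = {\<one>\<^bsub>braid_group n\<^esub>}"
    and "p \<in> N" and "dehornoy_pos n p"
    and "\<forall>q \<in> N. dehornoy_pos n q \<longrightarrow> dehornoy_le n p q"
  shows "p \<in> C_cent n"
proof -
  have G: "group (braid_group n)" using assms(2) by (simp add: normal_def)
  interpret G: group "braid_group n" by (rule G)
  interpret N: normal N "braid_group n" by (rule assms(2))
  have pc: "p \<in> carrier (braid_group n)" using assms(6) by (simp add: dehornoy_pos_def)
  have "p \<otimes>\<^bsub>braid_group n\<^esub> y = y \<otimes>\<^bsub>braid_group n\<^esub> p" if ys: "y \<in> sub_braid n (n - 1)" for y
  proof -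
    obtain v where v: "gens_in (n - 1) v" and yv: "y = braid_cls n v" using ys by (auto simp: sub_braid_def)
    have gvn: "gens_in n v" using gens_mono[OF v] by simp
    have yc: "y \<in> carrier (braid_group n)" using yv gvn cls_carrier by simp
    have yi: "braid_cls n (winv v) = inv\<^bsub>braid_group n\<^esub> y" using inv_cls[OF G gvn] yv by simp
    have yi2: "braid_cls n (winv (winv v)) = y" using yv by simp
    define q where "q = y \<otimes>\<^bsub>braid_group n\<^esub> p \<otimes>\<^bsub>braid_group n\<^esub> inv\<^bsub>braid_group n\<^esub> y"
    define r where "r = inv\<^bsub>braid_group n\<^esub> y \<otimes>\<^bsub>braid_group n\<^esub> p \<otimes>\<^bsub>braid_group n\<^esub> y"
    have qN: "q \<in> N" unfolding q_def using N.inv_op_closed2[OF yc assms(5)] .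
    have rN: "r \<in> N" unfolding r_def using N.inv_op_closed2[OF G.inv_closed[OF yc] assms(5)] yc by simp
    have qP: "dehornoy_pos n q" unfolding q_def
      using pos_conj[OF G assms(6) assms(5) assms(4) v] yv yi by simp
    have gwv: "gens_in (n - 1) (winv v)" using gens_winv[OF v] .
    have rP: "dehornoy_pos n r" unfolding r_def
      using pos_conj[OF G assms(6) assms(5) assms(4) gwv] yi yi2 by simp
    have qc: "q \<in> carrier (braid_group n)" and rc: "r \<in> carrier (braid_group n)"
      unfolding q_def r_def using yc pc by simp_all
    have "q = p"
    proof (rule ccontr)
      assume qp: "q \<noteq> p"
      then have pq: "dehornoy_pos n (inv\<^bsub>braid_group n\<^esub> p \<otimes>\<^bsub>braid_group n\<^esub> q)"
        using assms(7) qN qP by (auto simp: dehornoy_le_def dehornoy_less_def)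
      have "r \<noteq> p"
      proof
        assume "r = p"
        then have "q = y \<otimes>\<^bsub>braid_group n\<^esub> r \<otimes>\<^bsub>braid_group n\<^esub> inv\<^bsub>braid_group n\<^esub> y" by (simp add: q_def)
        also have "\<dots> = p" unfolding r_def using yc pc by (simp add: G.m_assoc) (metis G.inv_closed G.m_assoc G.r_inv G.l_one)
        finally show False using qp by simp
      qed
      then have pr: "dehornoy_pos n (inv\<^bsub>braid_group n\<^esub> p \<otimes>\<^bsub>braid_group n\<^esub> r)"
        using assms(7) rN rP by (auto simp: dehornoy_le_def dehornoy_less_def)
      have prN: "inv\<^bsub>braid_group n\<^esub> p \<otimes>\<^bsub>braid_group n\<^esub> r \<in> N"
        using N.m_closed[OF N.m_inv_closed[OF assms(5)] rN] .
      have c: "dehornoy_pos n (y \<otimes>\<^bsub>braid_group n\<^esub> (inv\<^bsub>braid_group n\<^esub> p \<otimes>\<^bsub>braid_group n\<^esub> r) \<otimes>\<^bsub>braid_group n\<^esub> inv\<^bsub>braid_group n\<^esub> y)"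
        using pos_conj[OF G pr prN assms(4) v] yv yi by simp
      have e: "y \<otimes>\<^bsub>braid_group n\<^esub> (inv\<^bsub>braid_group n\<^esub> p \<otimes>\<^bsub>braid_group n\<^esub> r) \<otimes>\<^bsub>braid_group n\<^esub> inv\<^bsub>braid_group n\<^esub> y
          = inv\<^bsub>braid_group n\<^esub> q \<otimes>\<^bsub>braid_group n\<^esub> p"
        unfolding q_def r_def using yc pc by (simp add: G.m_assoc G.inv_mult_group)
      have "dehornoy_pos n ((inv\<^bsub>braid_group n\<^esub> q \<otimes>\<^bsub>braid_group n\<^esub> p) \<otimes>\<^bsub>braid_group n\<^esub> (inv\<^bsub>braid_group n\<^esub> p \<otimes>\<^bsub>braid_group n\<^esub> q))"
        using pos_mult[OF G _ pq] c e by simp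
      moreover have "(inv\<^bsub>braid_group n\<^esub> q \<otimes>\<^bsub>braid_group n\<^esub> p) \<otimes>\<^bsub>braid_group n\<^esub> (inv\<^bsub>braid_group n\<^esub> p \<otimes>\<^bsub>braid_group n\<^esub> q) = \<one>\<^bsub>braid_group n\<^esub>"
        using qc pc by (simp add: G.m_assoc) (metis G.inv_closed G.m_assoc G.r_inv G.l_one G.l_inv)
      ultimately show False using pos_one by simp
    qed
    then have "y \<otimes>\<^bsub>braid_group n\<^esub> p \<otimes>\<^bsub>braid_group n\<^esub> inv\<^bsub>braid_group n\<^esub> y \<otimes>\<^bsub>braid_group n\<^esub> y = p \<otimes>\<^bsub>braid_group n\<^esub> y"
      by (simp add: q_def)
    then show ?thesis using yc pc by (simp add: G.m_assoc)
  qed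
  then show ?thesis using pc by (simp add: C_cent_def)
qed

end
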